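(* Let $t\ge 1$ be an integer and $n \geq 2t+110$. Then $D_t > n^{n-2t-17}$, where \[ D_t:= \min_{\substack{F \text{ forest}\\|F|=t}} \ \min_{\substack{T_0 \in \mathcal{T}_n \setminus \mathcal{S}_n \\ |T_0 \cap F| < t}} \ |\mathcal{T}_n[T_0;F]|. \]
   Context: $\mathcal{T}_n$ is the set of labelled spanning trees of $K_n$ (vertex set $[n]$), each identified with its edge set in $\binom{[n]}{2}$; forests are likewise identified with their edge sets and $|F|$ is the number of edges. $\mathcal{S}_n\subset\mathcal{T}_n$ is the set of stars (spanning trees with a vertex of degree $n-1$). For a forest $F$ and $T_0\in\mathcal{T}_n$, $\mathcal{T}_n[T_0;F]:=\{T\in\mathcal{T}_n : F\subseteq T,\ (T\cap T_0)\setminus F=\emptyset\}$, the trees containing $F$ that share no edge with $T_0$ outside $F$. The minimum in $D_t$ ranges over all forests $F$ of $K_n$ with $t$ edges and all non-star spanning trees $T_0$ with $|T_0\cap F|<t$. *)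

theory Defs
  imports Main
begin

definition Kn_edges :: "nat \<Rightarrow> nat set set" where
  "Kn_edges n = {e. e \<subseteq> {1..n} \<and> card e = 2}"

inductive reach :: "nat set set \<Rightarrow> nat \<Rightarrow> nat \<Rightarrow> bool" for E where
  refl: "reach E u u"
| step: "reach E u v \<Longrightarrow> {v, w} \<in> E \<Longrightarrow> reach E u w"

definition connected_on :: "nat \<Rightarrow> nat set set \<Rightarrow> bool" where
  "connected_on n E \<longleftrightarrow> (\<forall>u\<in>{1..n}. \<forall>v\<in>{1..n}. reach E u v)"

definition has_cycle :: "nat set set \<Rightarrow> bool" where
  "has_cycle E \<longleftrightarrow> (\<exists>vs. length vs \<ge> 3 \<and> distinct vs \<and>
      (\<forall>i. Suc i < length vs \<longrightarrow> {vs ! i, vs ! Suc i} \<in> E) \<and>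
      {last vs, hd vs} \<in> E)"

definition is_forest :: "nat \<Rightarrow> nat set set \<Rightarrow> bool" where
  "is_forest n F \<longleftrightarrow> F \<subseteq> Kn_edges n \<and> \<not> has_cycle F"

definition spanning_trees :: "nat \<Rightarrow> nat set set set" where
  "spanning_trees n = {T. T \<subseteq> Kn_edges n \<and> connected_on n T \<and> \<not> has_cycle T}"

definition stars :: "nat \<Rightarrow> nat set set set" where
  "stars n = {T \<in> spanning_trees n. \<exists>v\<in>{1..n}. card {e \<in> T. v \<in> e} = n - 1}"

definition trees_avoiding :: "nat \<Rightarrow> nat set set \<Rightarrow> nat set set \<Rightarrow> nat set set set" where
  "trees_avoiding n T0 F = {T \<in> spanning_trees n. F \<subseteq> T \<and> (T \<inter> T0) - F = {}}"

definition D :: "nat \<Rightarrow> nat \<Rightarrow> nat" where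
  "D n t = Min {card (trees_avoiding n T0 F) | F T0.
      is_forest n F \<and> card F = t \<and> T0 \<in> spanning_trees n - stars n \<and> card (T0 \<inter> F) < t}"

end

theory Submission
  imports Defs
begin


lemma reach_trans: "reach E v w \<Longrightarrow> reach E u v \<Longrightarrow> reach E u w"
  by (induction rule: reach.induct) (auto intro: reach.step)

lemma reach_edge: "{u,v} \<in> E \<Longrightarrow> reach E u v"
  using reach.step[OF reach.refl] by blast

lemma reach_sym: "reach E u v \<Longrightarrow> reach E v u"
proof (induction rule: reach.induct)
  case refl then show ?case by (rule reach.refl)
next
  case (step x v w)
  have "reach E w v" using step(2) by (intro reach_edge) (simp add: insert_commute)
  then show ?case using step(3) reach_trans by blast
qed

lemma reach_mono: "reach E u v \<Longrightarrow> E \<subseteq> E' \<Longrightarrow> reach E' u v"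
  by (induction rule: reach.induct) (auto intro: reach.intros)

lemma reach_insert:
  "reach (insert {a,b} E) x y \<longleftrightarrow> reach E x y \<or> (reach E x a \<and> reach E b y) \<or> (reach E x b \<and> reach E a y)"
proof
  assume "reach (insert {a,b} E) x y"
  then show "reach E x y \<or> (reach E x a \<and> reach E b y) \<or> (reach E x b \<and> reach E a y)"
  proof (induction rule: reach.induct)
    case refl then show ?case by (auto intro: reach.refl)
  next
    case (step x v w)
    show ?case
    proof (cases "{v,w} = {a,b}")
      case True
      then have "(v = a \<and> w = b) \<or> (v = b \<and> w = a)" by (auto simp: doubleton_eq_iff)
      then show ?thesis using step(3)
        by (elim disjE) (auto intro: reach.refl reach_trans reach_sym)
    next
      case False
      then have "{v,w} \<in> E" using step(2) by auto
      then have "reach E v w" by (rule reach_edge)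
      then show ?thesis using step(3) by (meson reach_trans)
    qed
  qed
next
  have m: "reach E u v \<Longrightarrow> reach (insert {a,b} E) u v" for u v by (erule reach_mono) auto
  have ab: "reach (insert {a,b} E) a b" "reach (insert {a,b} E) b a"
    by (auto intro: reach_edge simp: insert_commute)
  assume "reach E x y \<or> (reach E x a \<and> reach E b y) \<or> (reach E x b \<and> reach E a y)"
  then show "reach (insert {a,b} E) x y" using m ab by (meson reach_trans)
qed

lemma reach_remove:
  assumes "reach H x y" "\<not> reach H x a"
  shows "reach (H - {{a,b}}) x y"
  using assms
proof (induction rule: reach.induct)
  case refl show ?case by (rule reach.refl)
next
  case (step x v w)
  have rv: "reach H x v" using step(1) .
  have "\<not> reach H x a" using step(4) .
  show ?case
  proof (cases "{v,w} = {a,b}")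
    case True
    then have "(v = a \<and> w = b) \<or> (v = b \<and> w = a)" by (auto simp: doubleton_eq_iff)
    then show ?thesis using rv step by (metis reach.step)
  next
    case False
    then show ?thesis using step by (auto intro: reach.step)
  qed
qed

lemma reach_in:
  assumes "reach E u v" "E \<subseteq> Kn_edges n" "u \<noteq> v"
  shows "v \<in> {1..n}"
  using assms
proof (induction rule: reach.induct)
  case refl then show ?case by simp
next
  case (step x v w)
  then have "{v,w} \<subseteq> {1..n}" by (auto simp: Kn_edges_def)
  then show ?case by auto
qed



lemma has_cycle_mod:
  "has_cycle E \<longleftrightarrow> (\<exists>vs. 3 \<le> length vs \<and> distinct vs \<and>
      (\<forall>j<length vs. {vs!j, vs!(Suc j mod length vs)} \<in> E))"
proof
  assume "has_cycle E"
  then obtain vs where v: "length vs \<ge> 3" "distinct vs"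
    "\<forall>i. Suc i < length vs \<longrightarrow> {vs ! i, vs ! Suc i} \<in> E" "{last vs, hd vs} \<in> E"
    unfolding has_cycle_def by blast
  have "{vs!j, vs!(Suc j mod length vs)} \<in> E" if "j < length vs" for j
  proof (cases "Suc j < length vs")
    case True then show ?thesis using v(3) by simp
  next
    case False
    then have "Suc j = length vs" using that by simp
    then have "j = length vs - 1" "Suc j mod length vs = 0" by auto
    moreover have "vs \<noteq> []" using v(1) by auto
    then have "vs ! (length vs - 1) = last vs" "vs ! 0 = hd vs"
      by (simp_all add: last_conv_nth hd_conv_nth)
    ultimately show ?thesis using v(4) by simp
  qed
  then show "\<exists>vs. 3 \<le> length vs \<and> distinct vs \<and>
      (\<forall>j<length vs. {vs!j, vs!(Suc j mod length vs)} \<in> E)" using v by blast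
next
  assume "\<exists>vs. 3 \<le> length vs \<and> distinct vs \<and>
      (\<forall>j<length vs. {vs!j, vs!(Suc j mod length vs)} \<in> E)"
  then obtain vs where v: "3 \<le> length vs" "distinct vs"
      "\<forall>j<length vs. {vs!j, vs!(Suc j mod length vs)} \<in> E" by blast
  have "\<forall>i. Suc i < length vs \<longrightarrow> {vs ! i, vs ! Suc i} \<in> E"
    using v(3) by (metis Suc_lessD mod_less)
  moreover have "{last vs, hd vs} \<in> E"
  proof -
    have "length vs - 1 < length vs" using v(1) by simp
    then have "{vs!(length vs - 1), vs!(Suc (length vs - 1) mod length vs)} \<in> E" using v(3) by blast
    moreover have "Suc (length vs - 1) = length vs" using v(1) by simp
    then have "Suc (length vs - 1) mod length vs = 0" by simp
    moreover have "vs \<noteq> []" using v(1) by auto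
    ultimately show ?thesis by (simp add: last_conv_nth hd_conv_nth)
  qed
  ultimately show "has_cycle E" unfolding has_cycle_def using v by blast
qed

lemma has_cycle_mono: "has_cycle E \<Longrightarrow> E \<subseteq> E' \<Longrightarrow> has_cycle E'"
  unfolding has_cycle_def by blast

lemma chain_reach:
  assumes "\<forall>i. Suc i < length ws \<longrightarrow> {ws ! i, ws ! Suc i} \<in> E" "k < length ws"
  shows "reach E (ws!0) (ws!k)"
  using assms(2)
proof (induction k)
  case 0 show ?case by (rule reach.refl)
next
  case (Suc k)
  then show ?case using assms(1) by (auto intro: reach.step)
qed

lemma acyclic_insert:
  assumes "\<not> has_cycle E" "\<not> reach E a b"
  shows "\<not> has_cycle (insert {a,b} E)"
proof
  assume "has_cycle (insert {a,b} E)"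
  then obtain vs where v: "3 \<le> length vs" "distinct vs"
      "\<forall>j<length vs. {vs!j, vs!(Suc j mod length vs)} \<in> insert {a,b} E"
    unfolding has_cycle_mod by blast
  define L where "L = length vs"
  have "\<exists>j<L. {vs!j, vs!(Suc j mod L)} = {a,b}"
  proof (rule ccontr)
    assume "\<not> ?thesis"
    then have "\<forall>j<length vs. {vs!j, vs!(Suc j mod length vs)} \<in> E" using v(3) unfolding L_def by auto
    then have "has_cycle E" unfolding has_cycle_mod using v(1,2) by (intro exI[of _ vs]) simp
    then show False using assms(1) by blast
  qed
  then obtain j where j: "j < L" "{vs!j, vs!(Suc j mod L)} = {a,b}" by blast
  define ws where "ws = rotate (Suc j) vs"
  have lw: "length ws = L" unfolding ws_def L_def by simp
  have dw: "distinct ws" unfolding ws_def using v(2) by simp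
  have wn: "ws ! i = vs ! ((Suc j + i) mod L)" if "i < L" for i
  proof -
    have "i < length vs" using that L_def by simp
    from nth_rotate[OF this, of "Suc j"] show ?thesis unfolding ws_def L_def .
  qed
  have wc: "{ws!i, ws!(Suc i mod L)} \<in> insert {a,b} E" if "i < L" for i
  proof -
    have "(Suc j + i) mod L < L" using j(1) by simp
    then have "{vs!((Suc j + i) mod L), vs!(Suc ((Suc j + i) mod L) mod L)} \<in> insert {a,b} E"
      using v(3) unfolding L_def by simp
    moreover have "Suc ((Suc j + i) mod L) mod L = (Suc j + Suc i mod L) mod L"
      by (metis mod_Suc_eq mod_add_right_eq add_Suc_right)
    moreover have "Suc i mod L < L" using j(1) by simp
    ultimately show ?thesis using wn that by simp
  qed
  have w0: "ws!0 = vs!(Suc j mod L)" using wn[of 0] j(1) by simp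
  have wl: "ws!(L-1) = vs!j"
  proof -
    have "Suc j + (L - 1) = j + L" using j(1) by simp
    then have "(Suc j + (L - 1)) mod L = j" using j(1) by simp
    then show ?thesis using wn[of "L-1"] j(1) by simp
  qed
  have ab: "{ws!(L-1), ws!0} = {a,b}" using j(2) w0 wl by simp
  have "\<forall>i. Suc i < length ws \<longrightarrow> {ws ! i, ws ! Suc i} \<in> E"
  proof (intro allI impI)
    fix i assume i: "Suc i < length ws"
    then have "{ws!i, ws!(Suc i)} \<in> insert {a,b} E" using wc[of i] lw by simp
    moreover have "{ws!i, ws!(Suc i)} \<noteq> {a,b}"
    proof
      assume "{ws!i, ws!(Suc i)} = {a,b}"
      then have e: "{ws!i, ws!(Suc i)} = {ws!(L-1), ws!0}" using ab by simp
      have "L \<ge> 3" using v(1) L_def by simp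
      have "ws!i = ws!(L-1) \<or> ws!i = ws!0" using e by (auto simp: doubleton_eq_iff)
      moreover have "ws!i \<noteq> ws!(L-1)" using dw i lw \<open>L \<ge> 3\<close> by (simp add: nth_eq_iff_index_eq)
      ultimately have "ws!i = ws!0" by simp
      then have "i = 0" using dw i lw by (simp add: nth_eq_iff_index_eq)
      then have "{ws!0, ws!1} = {ws!(L-1), ws!0}" using e by simp
      then have "ws!1 = ws!(L-1) \<or> ws!0 = ws!(L-1)" by (auto simp: doubleton_eq_iff)
      moreover have "ws!1 \<noteq> ws!(L-1)" "ws!0 \<noteq> ws!(L-1)"
        using dw lw \<open>L \<ge> 3\<close> by (simp_all add: nth_eq_iff_index_eq)
      ultimately show False by blast
    qed
    ultimately show "{ws ! i, ws ! Suc i} \<in> E" by simp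
  qed
  then have "reach E (ws!0) (ws!(L-1))" using chain_reach lw j(1) by simp
  then have "reach E a b \<or> reach E b a" using ab by (auto simp: doubleton_eq_iff)
  then show False using assms(2) reach_sym by blast
qed



lemma simple_path:
  assumes "reach E a b"
  shows "\<exists>vs. vs \<noteq> [] \<and> hd vs = a \<and> last vs = b \<and> distinct vs \<and>
          (\<forall>i. Suc i < length vs \<longrightarrow> {vs!i, vs!Suc i} \<in> E)"
  using assms
proof (induction rule: reach.induct)
  case (refl u)
  show ?case by (rule exI[of _ "[u]"]) simp
next
  case (step x v w)
  then obtain vs where v: "vs \<noteq> []" "hd vs = x" "last vs = v" "distinct vs"
          "\<forall>i. Suc i < length vs \<longrightarrow> {vs!i, vs!Suc i} \<in> E" by blast
  show ?case
  proof (cases "w \<in> set vs")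
    case True
    then obtain i where i: "i < length vs" "vs!i = w" by (meson in_set_conv_nth)
    define us where "us = take (Suc i) vs"
    have "us \<noteq> []" "hd us = x" using v i unfolding us_def by auto
    moreover have "last us = w" using i unfolding us_def by (simp add: take_Suc_conv_app_nth)
    moreover have "distinct us" using v unfolding us_def by simp
    moreover have "\<forall>k. Suc k < length us \<longrightarrow> {us!k, us!Suc k} \<in> E"
      using v(5) unfolding us_def by simp
    ultimately show ?thesis by blast
  next
    case False
    define us where "us = vs @ [w]"
    have "us \<noteq> []" "hd us = x" "last us = w" "distinct us" using v False unfolding us_def by auto
    moreover have "\<forall>k. Suc k < length us \<longrightarrow> {us!k, us!Suc k} \<in> E"
    proof (intro allI impI)
      fix k assume k: "Suc k < length us"
      show "{us!k, us!Suc k} \<in> E"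
      proof (cases "Suc k < length vs")
        case True then show ?thesis using v(5) unfolding us_def by (simp add: nth_append)
      next
        case False
        then have "Suc k = length vs" using k unfolding us_def by simp
        then have kk: "k = length vs - 1" by simp
        have "Suc k = length vs" by fact
        then have "us!k = v" "us!Suc k = w" using v(1,3) kk unfolding us_def
          by (auto simp: nth_append last_conv_nth)
        then show ?thesis using step(2) by simp
      qed
    qed
    ultimately show ?thesis by blast
  qed
qed

lemma cycle_of_reach:
  assumes "reach E a b" "a \<noteq> b" "{a,b} \<notin> E"
  shows "has_cycle (insert {a,b} E)"
proof -
  obtain vs where v: "vs \<noteq> []" "hd vs = a" "last vs = b" "distinct vs"
          "\<forall>i. Suc i < length vs \<longrightarrow> {vs!i, vs!Suc i} \<in> E"
    using simple_path[OF assms(1)] by blast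
  have "length vs \<noteq> 1" using v assms(2)
    by (metis One_nat_def last_conv_nth hd_conv_nth diff_Suc_1)
  moreover have "length vs \<noteq> 2"
  proof
    assume "length vs = 2"
    then have "{vs!0, vs!1} \<in> E" using v(5) by auto
    moreover have "vs!0 = a" "vs!1 = b" using v \<open>length vs = 2\<close> by (auto simp: hd_conv_nth last_conv_nth)
    ultimately show False using assms(3) by simp
  qed
  moreover have "length vs \<noteq> 0" using v(1) by simp
  ultimately have "length vs \<ge> 3" by linarith
  then show ?thesis unfolding has_cycle_def using v by (intro exI[of _ vs]) (auto simp: insert_commute)
qed



definition mins :: "nat \<Rightarrow> nat set set \<Rightarrow> nat set" where
  "mins n E = {v \<in> {1..n}. \<forall>u. reach E v u \<longrightarrow> v \<le> u}"

definition cmin :: "nat set set \<Rightarrow> nat \<Rightarrow> nat" where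
  "cmin E x = (LEAST u. reach E x u)"

lemma cmin_reach: "reach E x (cmin E x)"
  unfolding cmin_def by (rule LeastI[of _ x]) (rule reach.refl)

lemma cmin_le: "reach E x u \<Longrightarrow> cmin E x \<le> u"
  unfolding cmin_def by (rule Least_le)

lemma cmin_eq: "reach E x y \<Longrightarrow> cmin E x = cmin E y"
proof -
  assume r: "reach E x y"
  have "cmin E x \<le> cmin E y" using cmin_le reach_trans[OF cmin_reach r] by blast
  moreover have "cmin E y \<le> cmin E x" using cmin_le reach_trans[OF cmin_reach reach_sym[OF r]] by blast
  ultimately show ?thesis by simp
qed

lemma cmin_in_mins:
  assumes "E \<subseteq> Kn_edges n" "x \<in> {1..n}"
  shows "cmin E x \<in> mins n E"
proof -
  have "cmin E x \<in> {1..n}"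
    using reach_in[OF cmin_reach assms(1)] assms(2) by (cases "x = cmin E x") auto
  moreover have "\<forall>u. reach E (cmin E x) u \<longrightarrow> cmin E x \<le> u"
    using cmin_le reach_trans cmin_reach by blast
  ultimately show ?thesis unfolding mins_def by blast
qed

lemma mins_cmin: "v \<in> mins n E \<Longrightarrow> cmin E v = v"
  unfolding mins_def using cmin_le[of E v v, OF reach.refl] cmin_reach[of E v]
  by (metis (mono_tags, lifting) le_antisym mem_Collect_eq)

lemma mins_sub: "mins n E \<subseteq> {1..n}" unfolding mins_def by auto

lemma Kn_finite: "finite (Kn_edges n)"
proof -
  have "Kn_edges n \<subseteq> Pow {1..n}" unfolding Kn_edges_def by auto
  then show ?thesis by (rule finite_subset) simp
qed

lemma Kn_edge_two: "e \<in> Kn_edges n \<Longrightarrow> \<exists>a b. a \<noteq> b \<and> e = {a,b} \<and> a \<in> {1..n} \<and> b \<in> {1..n}"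
  unfolding Kn_edges_def by (auto simp: card_2_iff) blast

lemma reach_empty: "reach {} u v \<Longrightarrow> v = u"
  by (induction rule: reach.induct) auto

lemma mins_insert_sub:
  assumes "a \<in> {1..n}" "b \<in> {1..n}"
  shows "mins n E - {max (cmin E a) (cmin E b)} \<subseteq> mins n (insert {a,b} E)"
proof
  fix v assume v: "v \<in> mins n E - {max (cmin E a) (cmin E b)}"
  then have vm: "v \<in> mins n E" by simp
  have "v \<le> u" if "reach (insert {a,b} E) v u" for u
  proof -
    have "reach E v u \<or> (reach E v a \<and> reach E b u) \<or> (reach E v b \<and> reach E a u)"
      using that reach_insert by blast
    then show ?thesis
    proof (elim disjE conjE)
      assume "reach E v u" then show ?thesis using vm unfolding mins_def by blast
    next
      assume h: "reach E v a" "reach E b u"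
      have "v = cmin E a" using cmin_eq[OF h(1)] mins_cmin[OF vm] by simp
      moreover have "cmin E b \<le> u" using cmin_le h(2) by blast
      ultimately show ?thesis using v by (cases "cmin E a \<le> cmin E b") (auto simp: max_def)
    next
      assume h: "reach E v b" "reach E a u"
      have "v = cmin E b" using cmin_eq[OF h(1)] mins_cmin[OF vm] by simp
      moreover have "cmin E a \<le> u" using cmin_le h(2) by blast
      ultimately show ?thesis using v by (cases "cmin E a \<le> cmin E b") (auto simp: max_def)
    qed
  qed
  then show "v \<in> mins n (insert {a,b} E)" using vm unfolding mins_def by blast
qed

lemma comp_count:
  assumes "finite E" "E \<subseteq> Kn_edges n"
  shows "card (mins n E) + card E \<ge> n"
  using assms
proof (induction E rule: finite_induct)
  case empty
  have "mins n {} = {1..n}" unfolding mins_def using reach_empty by auto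
  then show ?case by simp
next
  case (insert e E)
  obtain a b where ab: "a \<noteq> b" "e = {a,b}" "a \<in> {1..n}" "b \<in> {1..n}"
    using Kn_edge_two insert(4) by blast
  have ih: "card (mins n E) + card E \<ge> n" using insert by blast
  have "card (mins n E - {max (cmin E a) (cmin E b)}) \<le> card (mins n (insert e E))"
    using mins_insert_sub[OF ab(3,4), of E] ab(2) by (intro card_mono) (auto intro: finite_subset[OF mins_sub])
  moreover have "card (mins n E) \<le> card (mins n E - {max (cmin E a) (cmin E b)}) + 1"
    using finite_subset[OF mins_sub[of n E]] by (simp add: card_Diff_singleton_if card_gt_0_iff) (auto simp: card_gt_0_iff)
  moreover have "card (insert e E) = card E + 1" using insert(1,2) by simp
  ultimately show ?case using ih by linarith
qed

lemma mins_mono: "E \<subseteq> E' \<Longrightarrow> mins n E' \<subseteq> mins n E"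
  unfolding mins_def using reach_mono by blast

lemma acyclic_count:
  assumes "E \<subseteq> Kn_edges n" "\<not> has_cycle E"
  shows "card (mins n E) + card E \<le> n"
proof -
  have "finite E" using assms(1) Kn_finite finite_subset by blast
  then show ?thesis using assms
  proof (induction E rule: finite_induct)
    case empty
    have "mins n {} = {1..n}" unfolding mins_def using reach_empty by auto
    then show ?case by simp
  next
    case (insert e E)
    obtain a b where ab: "a \<noteq> b" "e = {a,b}" "a \<in> {1..n}" "b \<in> {1..n}"
      using Kn_edge_two insert(4) by blast
    have E1: "\<not> has_cycle E" using insert(5) has_cycle_mono by blast
    have ih: "card (mins n E) + card E \<le> n" using insert E1 by blast
    have nr: "\<not> reach E a b"
    proof
      assume "reach E a b"
      then have "has_cycle (insert {a,b} E)" using cycle_of_reach[of E a b] ab(1,2) insert(2) by simp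
      then show False using insert(5) ab(2) by simp
    qed
    have EK: "E \<subseteq> Kn_edges n" using insert(4) by simp
    define ca where "ca = cmin E a"
    define cb where "cb = cmin E b"
    have ne: "ca \<noteq> cb"
    proof
      assume "ca = cb"
      then have "reach E a cb" using cmin_reach[of E a] ca_def by simp
      then have "reach E a b" using reach_trans[OF reach_sym[OF cmin_reach[of E b]]] cb_def by blast
      then show False using nr by simp
    qed
    have r1: "reach (insert e E) ca cb" and r2: "reach (insert e E) cb ca"
    proof -
      have "reach (insert e E) ca a" using reach_sym[OF cmin_reach[of E a]] ca_def reach_mono by blast
      moreover have "reach (insert e E) a b" using ab(2) reach_edge by blast
      moreover have "reach (insert e E) b cb" using cmin_reach[of E b] cb_def reach_mono by blast
      ultimately show "reach (insert e E) ca cb" using reach_trans by metis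
      then show "reach (insert e E) cb ca" by (rule reach_sym)
    qed
    have "ca \<in> mins n E" "cb \<in> mins n E" using cmin_in_mins[OF EK] ab(3,4) ca_def cb_def by simp_all
    then have mE: "max ca cb \<in> mins n E" by (simp add: max_def)
    have mE': "max ca cb \<notin> mins n (insert e E)"
    proof (cases "ca \<le> cb")
      case True
      then have "max ca cb = cb" "ca < cb" using ne by auto
      then show ?thesis using r2 unfolding mins_def by auto
    next
      case False
      then have "max ca cb = ca" "cb < ca" by auto
      then show ?thesis using r1 unfolding mins_def by auto
    qed
    have sub: "mins n (insert e E) \<subseteq> mins n E - {max ca cb}"
      using mins_mono[of E "insert e E"] mE' by auto
    have "card (mins n (insert e E)) \<le> card (mins n E - {max ca cb})"
      using sub by (intro card_mono) (auto intro: finite_subset[OF mins_sub])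
    also have "\<dots> = card (mins n E) - 1" using mE finite_subset[OF mins_sub] by simp
    finally have c1: "card (mins n (insert e E)) \<le> card (mins n E) - 1" .
    have "card (mins n E) > 0" using mE finite_subset[OF mins_sub[of n E]] card_gt_0_iff by auto
    then have "card (mins n (insert e E)) + 1 \<le> card (mins n E)" using c1 by linarith
    moreover have "card (insert e E) = card E + 1" using insert(1,2) by simp
    ultimately show ?case using ih by linarith
  qed
qed

lemma acyclic_card:
  assumes "E \<subseteq> Kn_edges n" "\<not> has_cycle E" "n \<ge> 1"
  shows "card E \<le> n - 1"
proof -
  have "cmin E 1 \<in> mins n E" using cmin_in_mins[OF assms(1)] assms(3) by simp
  then have "card (mins n E) \<ge> 1" using finite_subset[OF mins_sub]
    by (metis One_nat_def Suc_leI card_gt_0_iff empty_iff finite_atLeastAtMost)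
  then show ?thesis using acyclic_count[OF assms(1,2)] by linarith
qed



locale proc =
  fixes n :: nat and F T0 :: "nat set set"
  assumes F_forest: "is_forest n F" and T0_sub: "T0 \<subseteq> Kn_edges n"
begin

definition R0 :: "nat set" where "R0 = mins n F"
definition und :: "(nat \<times> nat) set \<Rightarrow> nat set set" where "und Ds = (\<lambda>(v,r). {v,r}) ` Ds"
definition H :: "(nat \<times> nat) set \<Rightarrow> nat set set" where "H Ds = F \<union> und Ds"
definition Roots :: "(nat \<times> nat) set \<Rightarrow> nat set" where "Roots Ds = R0 - snd ` Ds"
definition step_ok :: "(nat \<times> nat) set \<Rightarrow> nat \<Rightarrow> nat \<Rightarrow> bool" where
  "step_ok Ds v r \<longleftrightarrow> r \<in> Roots Ds \<and> v \<in> {1..n} \<and> \<not> reach (H Ds) r v \<and> {v,r} \<notin> T0"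

inductive valid :: "(nat \<times> nat) set \<Rightarrow> bool" where
  empty: "valid {}"
| ins: "valid Ds \<Longrightarrow> step_ok Ds v r \<Longrightarrow> valid (insert (v,r) Ds)"

lemma F_sub: "F \<subseteq> Kn_edges n" using F_forest unfolding is_forest_def by simp
lemma F_acyc: "\<not> has_cycle F" using F_forest unfolding is_forest_def by simp
lemma R0_sub: "R0 \<subseteq> {1..n}" unfolding R0_def by (rule mins_sub)
lemma R0_fin: "finite R0" using R0_sub finite_subset by blast

lemma Roots_ins: "Roots (insert (v,r) Ds) = Roots Ds - {r}"
  unfolding Roots_def by auto
lemma H_ins: "H (insert (v,r) Ds) = insert {v,r} (H Ds)"
  unfolding H_def und_def by auto
lemma und_ins: "und (insert (v,r) Ds) = insert {v,r} (und Ds)"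
  unfolding und_def by auto
lemma H_empty: "H {} = F" unfolding H_def und_def by simp
lemma Roots_empty: "Roots {} = R0" unfolding Roots_def by simp
lemma Roots_sub: "Roots Ds \<subseteq> R0" unfolding Roots_def by auto

lemma step_not_in:
  assumes "step_ok Ds v r"
  shows "(v,r) \<notin> Ds" "{v,r} \<notin> H Ds" "v \<noteq> r"
proof -
  show "(v,r) \<notin> Ds" using assms unfolding step_ok_def Roots_def by force
  show "{v,r} \<notin> H Ds"
  proof
    assume "{v,r} \<in> H Ds"
    then have "reach (H Ds) r v" by (intro reach_edge) (simp add: insert_commute)
    then show False using assms unfolding step_ok_def by simp
  qed
  show "v \<noteq> r" using assms reach.refl unfolding step_ok_def by metis
qed

lemma valid_finite: "valid Ds \<Longrightarrow> finite Ds"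
  by (induction rule: valid.induct) auto

lemma valid_und: "valid Ds \<Longrightarrow> und Ds \<subseteq> Kn_edges n - T0"
proof (induction rule: valid.induct)
  case empty then show ?case unfolding und_def by simp
next
  case (ins Ds v r)
  have "r \<in> R0" using ins(2) Roots_sub[of Ds] unfolding step_ok_def by blast
  then have "r \<in> {1..n}" using R0_sub by blast
  moreover have "v \<in> {1..n}" "{v,r} \<notin> T0"
    using ins(2) unfolding step_ok_def by auto
  moreover have "v \<noteq> r" using step_not_in[OF ins(2)] by simp
  ultimately have "{v,r} \<in> Kn_edges n - T0" unfolding Kn_edges_def by auto
  then show ?case using ins(3) und_ins by simp
qed

lemma valid_H_sub: "valid Ds \<Longrightarrow> H Ds \<subseteq> Kn_edges n"
  using valid_und F_sub unfolding H_def by blast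

lemma valid_card:
  "valid Ds \<Longrightarrow> card (und Ds) = card Ds \<and> card (Roots Ds) + card Ds = card R0"
proof (induction rule: valid.induct)
  case empty then show ?case unfolding und_def Roots_def by simp
next
  case (ins Ds v r)
  have f: "finite Ds" using valid_finite[OF ins(1)] .
  have n1: "(v,r) \<notin> Ds" "{v,r} \<notin> und Ds" using step_not_in[OF ins(2)] unfolding H_def by auto
  have rR: "r \<in> Roots Ds" using ins(2) unfolding step_ok_def by simp
  have fR: "finite (Roots Ds)" using Roots_sub R0_fin finite_subset by blast
  have "card (und (insert (v,r) Ds)) = card (insert (v,r) Ds)"
    using n1 f ins(3) und_ins unfolding und_def by simp
  moreover have "card (Roots (insert (v,r) Ds)) + card (insert (v,r) Ds) = card R0"
  proof -
    have "card (Roots (insert (v,r) Ds)) = card (Roots Ds) - 1" using Roots_ins rR fR by simp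
    moreover have "card (Roots Ds) > 0" using rR fR card_gt_0_iff by blast
    ultimately show ?thesis using ins(3) f n1 by simp
  qed
  ultimately show ?case by blast
qed

lemma valid_acyclic: "valid Ds \<Longrightarrow> \<not> has_cycle (H Ds)"
proof (induction rule: valid.induct)
  case empty then show ?case using F_acyc H_empty by simp
next
  case (ins Ds v r)
  have "\<not> reach (H Ds) v r" using ins(2) reach_sym unfolding step_ok_def by blast
  then show ?case using acyclic_insert[OF ins(3)] H_ins by simp
qed

lemma valid_roots:
  "valid Ds \<Longrightarrow> (\<forall>x\<in>{1..n}. \<exists>\<rho>\<in>Roots Ds. reach (H Ds) x \<rho>) \<and>
     (\<forall>\<rho>1\<in>Roots Ds. \<forall>\<rho>2\<in>Roots Ds. reach (H Ds) \<rho>1 \<rho>2 \<longrightarrow> \<rho>1 = \<rho>2)"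
proof (induction rule: valid.induct)
  case empty
  have "\<forall>x\<in>{1..n}. \<exists>\<rho>\<in>R0. reach F x \<rho>"
    using cmin_in_mins[OF F_sub] cmin_reach unfolding R0_def by blast
  moreover have "\<forall>\<rho>1\<in>R0. \<forall>\<rho>2\<in>R0. reach F \<rho>1 \<rho>2 \<longrightarrow> \<rho>1 = \<rho>2"
  proof (intro ballI impI)
    fix \<rho>1 \<rho>2 assume a: "\<rho>1 \<in> R0" "\<rho>2 \<in> R0" "reach F \<rho>1 \<rho>2"
    then have "\<rho>1 \<le> \<rho>2" "\<rho>2 \<le> \<rho>1" using reach_sym[OF a(3)] unfolding R0_def mins_def by auto
    then show "\<rho>1 = \<rho>2" by simp
  qed
  ultimately show ?case using H_empty Roots_empty by simp
next
  case (ins Ds v r)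
  note st = ins(2)[unfolded step_ok_def]
  have IA: "\<forall>x\<in>{1..n}. \<exists>\<rho>\<in>Roots Ds. reach (H Ds) x \<rho>" using ins(3) by blast
  have IB: "\<forall>\<rho>1\<in>Roots Ds. \<forall>\<rho>2\<in>Roots Ds. reach (H Ds) \<rho>1 \<rho>2 \<longrightarrow> \<rho>1 = \<rho>2" using ins(3) by blast
  obtain \<rho>v where \<rho>v: "\<rho>v \<in> Roots Ds" "reach (H Ds) v \<rho>v" using IA st by blast
  have \<rho>vr: "\<rho>v \<noteq> r"
  proof
    assume "\<rho>v = r"
    then have "reach (H Ds) r v" using \<rho>v(2) reach_sym by blast
    then show False using st by simp
  qed
  have RI: "reach (H (insert (v,r) Ds)) x y \<longleftrightarrow> reach (H Ds) x y \<or> (reach (H Ds) x v \<and> reach (H Ds) r y)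
      \<or> (reach (H Ds) x r \<and> reach (H Ds) v y)" for x y
    unfolding H_ins by (rule reach_insert)
  have A: "\<forall>x\<in>{1..n}. \<exists>\<rho>\<in>Roots (insert (v,r) Ds). reach (H (insert (v,r) Ds)) x \<rho>"
  proof
    fix x assume x: "x \<in> {1..n}"
    obtain \<rho> where \<rho>: "\<rho> \<in> Roots Ds" "reach (H Ds) x \<rho>" using IA x by blast
    show "\<exists>\<rho>\<in>Roots (insert (v,r) Ds). reach (H (insert (v,r) Ds)) x \<rho>"
    proof (cases "\<rho> = r")
      case False
      have "H Ds \<subseteq> H (insert (v,r) Ds)" using H_ins by auto
      then have "reach (H (insert (v,r) Ds)) x \<rho>" using \<rho>(2) reach_mono by blast
      then show ?thesis using \<rho>(1) False Roots_ins by blast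
    next
      case True
      then have "reach (H Ds) x r \<and> reach (H Ds) v \<rho>v" using \<rho> \<rho>v by simp
      then have "reach (H (insert (v,r) Ds)) x \<rho>v" using RI[THEN iffD2] by blast
      then show ?thesis using \<rho>v \<rho>vr Roots_ins by blast
    qed
  qed
  have B: "\<forall>\<rho>1\<in>Roots (insert (v,r) Ds). \<forall>\<rho>2\<in>Roots (insert (v,r) Ds).
      reach (H (insert (v,r) Ds)) \<rho>1 \<rho>2 \<longrightarrow> \<rho>1 = \<rho>2"
  proof (intro ballI impI)
    fix \<rho>1 \<rho>2 assume r1: "\<rho>1 \<in> Roots (insert (v,r) Ds)" and r2: "\<rho>2 \<in> Roots (insert (v,r) Ds)"
      and rr: "reach (H (insert (v,r) Ds)) \<rho>1 \<rho>2"
    have r1': "\<rho>1 \<in> Roots Ds" "\<rho>1 \<noteq> r" and r2': "\<rho>2 \<in> Roots Ds" "\<rho>2 \<noteq> r"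
      using r1 r2 Roots_ins by auto
    have "reach (H Ds) \<rho>1 \<rho>2 \<or> (reach (H Ds) \<rho>1 v \<and> reach (H Ds) r \<rho>2)
      \<or> (reach (H Ds) \<rho>1 r \<and> reach (H Ds) v \<rho>2)" using RI[THEN iffD1, OF rr] .
    then show "\<rho>1 = \<rho>2"
    proof (elim disjE conjE)
      assume "reach (H Ds) \<rho>1 \<rho>2" then show ?thesis using IB r1' r2' by blast
    next
      assume "reach (H Ds) r \<rho>2"
      then have "r = \<rho>2" using IB r2' st by blast
      then show ?thesis using r2' by simp
    next
      assume "reach (H Ds) \<rho>1 r"
      then have "\<rho>1 = r" using IB r1' st by blast
      then show ?thesis using r1' by simp
    qed
  qed
  show ?case using A B by blast
qed

end


context proc begin

lemma valid_I3:
  "valid Ds \<Longrightarrow> \<forall>(x,y)\<in>Ds. (\<forall>\<rho>\<in>Roots Ds. \<not> reach (H Ds - {{x,y}}) y \<rho>) \<and>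
                       (\<exists>\<rho>\<in>Roots Ds. reach (H Ds - {{x,y}}) x \<rho>)"
proof (induction rule: valid.induct)
  case empty then show ?case by simp
next
  case (ins Ds v r)
  note st = ins(2)[unfolded step_ok_def]
  have IA: "\<forall>x\<in>{1..n}. \<exists>\<rho>\<in>Roots Ds. reach (H Ds) x \<rho>" using valid_roots[OF ins(1)] by blast
  have IB: "\<forall>\<rho>1\<in>Roots Ds. \<forall>\<rho>2\<in>Roots Ds. reach (H Ds) \<rho>1 \<rho>2 \<longrightarrow> \<rho>1 = \<rho>2"
    using valid_roots[OF ins(1)] by blast
  obtain \<rho>v where \<rho>v: "\<rho>v \<in> Roots Ds" "reach (H Ds) v \<rho>v" using IA st by blast
  have \<rho>vr: "\<rho>v \<noteq> r"
  proof
    assume "\<rho>v = r"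
    then have "reach (H Ds) r v" using \<rho>v(2) reach_sym by blast
    then show False using st by simp
  qed
  have nH: "{v,r} \<notin> H Ds" using step_not_in[OF ins(2)] by simp
  have R': "Roots (insert (v,r) Ds) = Roots Ds - {r}" by (rule Roots_ins)
  have new: "(\<forall>\<rho>\<in>Roots (insert (v,r) Ds). \<not> reach (H (insert (v,r) Ds) - {{v,r}}) r \<rho>) \<and>
             (\<exists>\<rho>\<in>Roots (insert (v,r) Ds). reach (H (insert (v,r) Ds) - {{v,r}}) v \<rho>)"
  proof -
    have e: "H (insert (v,r) Ds) - {{v,r}} = H Ds" using H_ins nH by auto
    have "\<forall>\<rho>\<in>Roots Ds - {r}. \<not> reach (H Ds) r \<rho>" using IB st by blast
    moreover have "\<rho>v \<in> Roots Ds - {r}" using \<rho>v \<rho>vr by simp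
    ultimately show ?thesis using e R' \<rho>v by auto
  qed
  have old: "(\<forall>\<rho>\<in>Roots (insert (v,r) Ds). \<not> reach (H (insert (v,r) Ds) - {{x,y}}) y \<rho>) \<and>
             (\<exists>\<rho>\<in>Roots (insert (v,r) Ds). reach (H (insert (v,r) Ds) - {{x,y}}) x \<rho>)"
    if xy: "(x,y) \<in> Ds" for x y
  proof -
    define G where "G = H Ds - {{x,y}}"
    have ih1: "\<forall>\<rho>\<in>Roots Ds. \<not> reach G y \<rho>" and ih2: "\<exists>\<rho>\<in>Roots Ds. reach G x \<rho>"
      using ins(3) xy unfolding G_def by auto
    have eH: "{x,y} \<in> H Ds" using xy unfolding H_def und_def by auto
    then have ne: "{x,y} \<noteq> {v,r}" using nH by auto
    have GE: "H (insert (v,r) Ds) - {{x,y}} = insert {v,r} G" unfolding G_def using H_ins ne by auto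
    have GH: "G \<subseteq> H Ds" unfolding G_def by auto
    have RI: "reach (insert {v,r} G) a b \<longleftrightarrow> reach G a b \<or> (reach G a v \<and> reach G r b)
      \<or> (reach G a r \<and> reach G v b)" for a b by (rule reach_insert)
    have P1: "\<not> reach (insert {v,r} G) y \<rho>" if \<rho>: "\<rho> \<in> Roots Ds - {r}" for \<rho>
    proof
      assume "reach (insert {v,r} G) y \<rho>"
      then have "reach G y \<rho> \<or> (reach G y v \<and> reach G r \<rho>) \<or> (reach G y r \<and> reach G v \<rho>)"
        using RI[THEN iffD1] by blast
      then show False
      proof (elim disjE conjE)
        assume "reach G y \<rho>" then show False using ih1 \<rho> by blast
      next
        assume "reach G r \<rho>"
        then have "reach (H Ds) r \<rho>" using GH reach_mono by blast
        then show False using IB \<rho> st by blast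
      next
        assume "reach G y r" then show False using ih1 st by blast
      qed
    qed
    obtain \<rho>0 where \<rho>0: "\<rho>0 \<in> Roots Ds" "reach G x \<rho>0" using ih2 by blast
    have P2: "\<exists>\<rho>\<in>Roots Ds - {r}. reach (insert {v,r} G) x \<rho>"
    proof (cases "\<rho>0 = r")
      case False
      then show ?thesis using \<rho>0 reach_mono[of G x \<rho>0 "insert {v,r} G"] by blast
    next
      case True
      have nvx: "\<not> reach (H Ds) v x"
      proof
        assume "reach (H Ds) v x"
        moreover have "reach (H Ds) x r" using \<rho>0(2) True GH reach_mono by blast
        ultimately have "reach (H Ds) v r" using reach_trans by blast
        then show False using st reach_sym by blast
      qed
      have "reach G v \<rho>v" unfolding G_def by (rule reach_remove[OF \<rho>v(2) nvx])
      then have "reach (insert {v,r} G) x \<rho>v" using RI[THEN iffD2] \<rho>0(2) True by blast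
      then show ?thesis using \<rho>v \<rho>vr by blast
    qed
    show ?thesis using P1 P2 GE R' by auto
  qed
  define Q where "Q = (\<lambda>x y. (\<forall>\<rho>\<in>Roots (insert (v,r) Ds). \<not> reach (H (insert (v,r) Ds) - {{x,y}}) y \<rho>) \<and>
             (\<exists>\<rho>\<in>Roots (insert (v,r) Ds). reach (H (insert (v,r) Ds) - {{x,y}}) x \<rho>))"
  have "Q v r" using new unfolding Q_def by simp
  moreover have "\<forall>(x,y)\<in>Ds. Q x y" using old unfolding Q_def by blast
  ultimately have "\<forall>(x,y)\<in>insert (v,r) Ds. Q x y" by simp
  then show ?case unfolding Q_def .
qed

lemma valid_unique_sub:
  assumes "valid D1" "valid D2" "und D1 = und D2" "Roots D1 = Roots D2"
  shows "D1 \<subseteq> D2"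
proof
  fix p assume p: "p \<in> D1"
  obtain x y where xy: "p = (x,y)" by (cases p)
  have "{x,y} \<in> und D1" using p xy unfolding und_def by force
  then have "{x,y} \<in> und D2" using assms(3) by simp
  then obtain a b where ab: "(a,b) \<in> D2" "{a,b} = {x,y}" unfolding und_def by auto
  then have "(a,b) = (x,y) \<or> (a,b) = (y,x)" by (auto simp: doubleton_eq_iff)
  moreover have "(y,x) \<notin> D2"
  proof
    assume "(y,x) \<in> D2"
    then obtain \<rho> where \<rho>: "\<rho> \<in> Roots D2" "reach (H D2 - {{y,x}}) y \<rho>"
      using valid_I3[OF assms(2)] by blast
    have hh: "H D2 - {{y,x}} = H D1 - {{x,y}}" using assms(3) unfolding H_def by (simp add: insert_commute)
    have "\<forall>\<rho>\<in>Roots D1. \<not> reach (H D1 - {{x,y}}) y \<rho>" using valid_I3[OF assms(1)] p xy by blast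
    then show False using \<rho> hh assms(4) by simp
  qed
  ultimately show "p \<in> D2" using ab xy by auto
qed

lemma valid_unique:
  assumes "valid D1" "valid D2" "und D1 = und D2" "Roots D1 = Roots D2"
  shows "D1 = D2"
proof
  show "D1 \<subseteq> D2" by (rule valid_unique_sub[OF assms])
  show "D2 \<subseteq> D1" by (rule valid_unique_sub[OF assms(2,1) assms(3,4)[symmetric]])
qed

end


context proc begin

definition Vk :: "nat \<Rightarrow> (nat \<times> nat) set set" where
  "Vk k = {Ds. valid Ds \<and> card Ds = k}"
definition opt :: "(nat \<times> nat) set \<Rightarrow> (nat \<times> nat) set" where
  "opt Ds = {(v,r). step_ok Ds v r}"

lemma valid_sub: "valid Ds \<Longrightarrow> Ds \<subseteq> {1..n} \<times> {1..n}"
proof (induction rule: valid.induct)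
  case empty then show ?case by simp
next
  case (ins Ds v r)
  have "r \<in> R0" using ins(2) Roots_sub[of Ds] unfolding step_ok_def by blast
  then have "r \<in> {1..n}" using R0_sub by blast
  moreover have "v \<in> {1..n}" using ins(2) unfolding step_ok_def by auto
  ultimately show ?case using ins(3) by simp
qed

lemma Vk_finite: "finite (Vk k)"
proof -
  have "Vk k \<subseteq> Pow ({1..n} \<times> {1..n})" unfolding Vk_def using valid_sub by blast
  then show ?thesis by (rule finite_subset) simp
qed

lemma opt_sub: "opt Ds \<subseteq> {1..n} \<times> {1..n}"
proof
  fix p assume "p \<in> opt Ds"
  then obtain v r where p: "p = (v,r)" "step_ok Ds v r" unfolding opt_def by auto
  have "r \<in> R0" using p(2) Roots_sub[of Ds] unfolding step_ok_def by blast
  then have "r \<in> {1..n}" using R0_sub by blast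
  moreover have "v \<in> {1..n}" using p(2) unfolding step_ok_def by auto
  ultimately show "p \<in> {1..n} \<times> {1..n}" using p by simp
qed

lemma opt_finite: "finite (opt Ds)"
  using opt_sub finite_subset by blast

lemma T0_pairs: "card {(v,r). {v,r} \<in> T0} \<le> 2 * card T0"
proof -
  have fT: "finite T0" using T0_sub Kn_finite finite_subset by blast
  let ?f = "\<lambda>(e::nat set, b::bool). if b then (Min e, Max e) else (Max e, Min e)"
  have "{(v,r). {v,r} \<in> T0} \<subseteq> ?f ` (T0 \<times> UNIV)"
  proof
    fix p assume "p \<in> {(v,r). {v,r} \<in> T0}"
    then obtain v r where p: "p = (v,r)" "{v,r} \<in> T0" by auto
    have "v \<noteq> r" using p(2) T0_sub unfolding Kn_edges_def by auto
    show "p \<in> ?f ` (T0 \<times> UNIV)"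
    proof (cases "v < r")
      case True
      then have "?f ({v,r}, True) = (v,r)" by (simp add: min_def max_def)
      then show ?thesis using p(1,2) by (intro image_eqI[of _ _ "({v,r}, True)"]) auto
    next
      case False
      then have "?f ({v,r}, False) = (v,r)" using \<open>v \<noteq> r\<close> by (simp add: min_def max_def)
      then show ?thesis using p(1,2) by (intro image_eqI[of _ _ "({v,r}, False)"]) auto
    qed
  qed
  then have "card {(v,r). {v,r} \<in> T0} \<le> card (?f ` (T0 \<times> UNIV))"
    by (intro card_mono) (auto intro: finite_imageI simp: fT)
  also have "\<dots> \<le> card (T0 \<times> (UNIV :: bool set))" by (rule card_image_le) (simp add: fT)
  also have "\<dots> = 2 * card T0" by (simp add: card_cartesian_product)
  finally show ?thesis .
qed

lemma opt_card:
  assumes "valid Ds" "card T0 \<le> n - 1"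
  shows "(card (Roots Ds) - 3) * n \<le> card (opt Ds)"
proof -
  define P where "P = {1..n} \<times> Roots Ds"
  define Re where "Re = {(v,r). (v,r) \<in> P \<and> reach (H Ds) r v}"
  define Q where "Q = {(v,r). {v,r} \<in> T0}"
  have IB: "\<forall>\<rho>1\<in>Roots Ds. \<forall>\<rho>2\<in>Roots Ds. reach (H Ds) \<rho>1 \<rho>2 \<longrightarrow> \<rho>1 = \<rho>2"
    using valid_roots[OF assms(1)] by blast
  have fR: "finite (Roots Ds)" using Roots_sub R0_fin finite_subset by blast
  have cP: "card P = n * card (Roots Ds)" unfolding P_def by (simp add: card_cartesian_product)
  have "inj_on fst Re"
  proof (rule inj_onI)
    fix p q assume "p \<in> Re" "q \<in> Re" "fst p = fst q"
    then obtain v r1 r2 where h: "p = (v,r1)" "q = (v,r2)" "r1 \<in> Roots Ds" "r2 \<in> Roots Ds"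
      "reach (H Ds) r1 v" "reach (H Ds) r2 v" unfolding Re_def P_def by auto
    have "reach (H Ds) r1 r2" using reach_trans[OF reach_sym[OF h(6)] h(5)] .
    then have "r1 = r2" using IB h(3,4) by blast
    then show "p = q" using h by simp
  qed
  then have e1: "card (fst ` Re) = card Re" by (rule card_image)
  have "fst ` Re \<subseteq> {1..n}" unfolding Re_def P_def by auto
  then have "card (fst ` Re) \<le> card {1..n}" by (intro card_mono) simp_all
  then have cRe: "card Re \<le> n" using e1 by simp
  have cQ: "card Q \<le> 2 * n - 2" using T0_pairs assms(2) unfolding Q_def by linarith
  have sub: "P - Re - Q \<subseteq> opt Ds"
    unfolding P_def Re_def Q_def opt_def step_ok_def by auto
  have fP: "finite P" unfolding P_def using fR by simp
  have "Q \<subseteq> {1..n} \<times> {1..n}" unfolding Q_def using T0_sub unfolding Kn_edges_def by auto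
  then have fQ: "finite Q" using finite_subset by blast
  have fRe: "finite Re" unfolding Re_def using fP by (auto intro: finite_subset)
  have c1: "card (P - Re - Q) \<ge> card (P - Re) - card Q" using diff_card_le_card_Diff[OF fQ] .
  have c2: "card (P - Re) \<ge> card P - card Re" using diff_card_le_card_Diff[OF fRe] .
  have c3: "card (P - Re - Q) \<le> card (opt Ds)" using sub opt_finite by (rule card_mono[rotated])
  have "(card (Roots Ds) - 3) * n = card (Roots Ds) * n - 3 * n" by (simp add: diff_mult_distrib)
  moreover have "card P = card (Roots Ds) * n" using cP by simp
  ultimately show ?thesis using c1 c2 c3 cRe cQ by linarith
qed

end


context proc begin

lemma sum_opt_le: "(\<Sum>Ds\<in>Vk k. card (opt Ds)) \<le> Suc k * card (Vk (Suc k))"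
proof -
  have fin: "finite (Vk k)" "\<forall>Ds\<in>Vk k. finite (opt Ds)" using Vk_finite opt_finite by auto
  have "(\<Sum>Ds\<in>Vk k. card (opt Ds)) = card (SIGMA Ds:Vk k. opt Ds)" using fin by simp
  also have "\<dots> \<le> card (\<Union>D'\<in>Vk (Suc k). (\<lambda>s. (D' - {s}, s)) ` D')"
  proof (rule card_mono)
    show "finite (\<Union>D'\<in>Vk (Suc k). (\<lambda>s. (D' - {s}, s)) ` D')"
      using Vk_finite by (auto simp: Vk_def intro: valid_finite)
    show "(SIGMA Ds:Vk k. opt Ds) \<subseteq> (\<Union>D'\<in>Vk (Suc k). (\<lambda>s. (D' - {s}, s)) ` D')"
    proof
      fix p assume "p \<in> (SIGMA Ds:Vk k. opt Ds)"
      then obtain Ds v r where p: "p = (Ds, (v,r))" "Ds \<in> Vk k" "step_ok Ds v r"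
        unfolding opt_def by auto
      have vD: "valid Ds" "card Ds = k" using p(2) unfolding Vk_def by auto
      have nin: "(v,r) \<notin> Ds" using step_not_in[OF p(3)] by simp
      have "valid (insert (v,r) Ds)" using valid.ins[OF vD(1) p(3)] .
      moreover have "card (insert (v,r) Ds) = Suc k" using vD nin valid_finite by simp
      ultimately have "insert (v,r) Ds \<in> Vk (Suc k)" unfolding Vk_def by simp
      moreover have "p = (insert (v,r) Ds - {(v,r)}, (v,r))" using p(1) nin by simp
      ultimately show "p \<in> (\<Union>D'\<in>Vk (Suc k). (\<lambda>s. (D' - {s}, s)) ` D')" by blast
    qed
  qed
  also have "\<dots> \<le> (\<Sum>D'\<in>Vk (Suc k). card ((\<lambda>s. (D' - {s}, s)) ` D'))"
    by (rule card_UN_le[OF Vk_finite])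
  also have "\<dots> \<le> (\<Sum>D'\<in>Vk (Suc k). Suc k)"
  proof (rule sum_mono)
    fix D' assume "D' \<in> Vk (Suc k)"
    then have "card D' = Suc k" "finite D'" unfolding Vk_def using valid_finite by auto
    then show "card ((\<lambda>s. (D' - {s}, s)) ` D') \<le> Suc k" using card_image_le[of D'] by simp
  qed
  also have "\<dots> = Suc k * card (Vk (Suc k))" by simp
  finally show ?thesis .
qed

lemma sum_opt_ge:
  assumes "card T0 \<le> n - 1"
  shows "card (Vk k) * ((card R0 - 3 - k) * n) \<le> (\<Sum>Ds\<in>Vk k. card (opt Ds))"
proof -
  have "(\<Sum>Ds\<in>Vk k. (card R0 - 3 - k) * n) \<le> (\<Sum>Ds\<in>Vk k. card (opt Ds))"
  proof (rule sum_mono)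
    fix Ds assume "Ds \<in> Vk k"
    then have v: "valid Ds" "card Ds = k" unfolding Vk_def by auto
    have c: "card (Roots Ds) + k = card R0" using valid_card[OF v(1)] v(2) by simp
    then have "card (Roots Ds) = card R0 - k" by linarith
    then have "card R0 - 3 - k = card (Roots Ds) - 3" by simp
    then show "(card R0 - 3 - k) * n \<le> card (opt Ds)" using opt_card[OF v(1) assms] by simp
  qed
  then show ?thesis by simp
qed

lemma Vk_0: "Vk 0 = {{}}"
proof -
  have "Ds \<in> Vk 0 \<longleftrightarrow> Ds = {}" for Ds
    unfolding Vk_def using valid_finite valid.empty by auto
  then show ?thesis by auto
qed

lemma Vk_bound:
  assumes "card T0 \<le> n - 1"
  shows "n ^ k * ((card R0 - 3) choose k) \<le> card (Vk k)"
proof (induction k)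
  case 0 then show ?case using Vk_0 by simp
next
  case (Suc k)
  define m where "m = card R0 - 3"
  have "Suc k * (n ^ Suc k * (m choose Suc k)) = n ^ Suc k * (Suc k * (m choose Suc k))" by (rule mult.left_commute)
  also have "\<dots> = n ^ Suc k * ((m - k) * (m choose k))"
  proof -
    have bb: "Suc k * (m choose Suc k) = (m - k) * (m choose k)"
      using binomial_absorption[of k m] binomial_absorb_comp[of m k] by simp
    show ?thesis by (simp only: bb)
  qed
  also have "\<dots> = (n ^ k * (m choose k)) * ((m - k) * n)" by (simp add: algebra_simps)
  also have "\<dots> \<le> card (Vk k) * ((m - k) * n)" using Suc.IH m_def by (intro mult_right_mono) simp_all
  also have "\<dots> \<le> (\<Sum>Ds\<in>Vk k. card (opt Ds))" using sum_opt_ge[OF assms, of k] m_def by simp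
  also have "\<dots> \<le> Suc k * card (Vk (Suc k))" by (rule sum_opt_le)
  finally have "Suc k * (n ^ Suc k * (m choose Suc k)) \<le> Suc k * card (Vk (Suc k))" .
  then have "n ^ Suc k * (m choose Suc k) \<le> card (Vk (Suc k))" by (rule Suc_mult_le_cancel1[THEN iffD1])
  then show ?case using m_def by simp
qed

end


lemma kn_edge: "a \<in> {1..n} \<Longrightarrow> b \<in> {1..n} \<Longrightarrow> a \<noteq> b \<Longrightarrow> {a,b} \<in> Kn_edges n"
  unfolding Kn_edges_def by auto

lemma nonstar_nonadj:
  assumes "T0 \<in> spanning_trees n - stars n" "u \<in> {1..n}"
  shows "\<exists>x\<in>{1..n}. x \<noteq> u \<and> {u,x} \<notin> T0"
proof (rule ccontr)
  assume "\<not> ?thesis"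
  then have all: "\<forall>x\<in>{1..n}. x \<noteq> u \<longrightarrow> {u,x} \<in> T0" by blast
  have T0K: "T0 \<subseteq> Kn_edges n" using assms(1) unfolding spanning_trees_def by auto
  have "{e \<in> T0. u \<in> e} = (\<lambda>x. {u,x}) ` ({1..n} - {u})"
  proof
    show "{e \<in> T0. u \<in> e} \<subseteq> (\<lambda>x. {u,x}) ` ({1..n} - {u})"
    proof
      fix e assume e: "e \<in> {e \<in> T0. u \<in> e}"
      then obtain a b where ab: "a \<noteq> b" "e = {a,b}" "a \<in> {1..n}" "b \<in> {1..n}"
        using Kn_edge_two T0K by blast
      show "e \<in> (\<lambda>x. {u,x}) ` ({1..n} - {u})"
      proof (cases "a = u")
        case True then show ?thesis using ab by auto
      next
        case False then have "b = u" using e ab by auto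
        then show ?thesis using ab by (intro image_eqI[of _ _ a]) auto
      qed
    qed
    show "(\<lambda>x. {u,x}) ` ({1..n} - {u}) \<subseteq> {e \<in> T0. u \<in> e}" using all by auto
  qed
  moreover have "inj_on (\<lambda>x. {u,x}) ({1..n} - {u})"
    by (rule inj_onI) (auto simp: doubleton_eq_iff)
  ultimately have "card {e \<in> T0. u \<in> e} = n - 1"
    using assms(2) by (simp add: card_image)
  then have "T0 \<in> stars n" using assms unfolding stars_def by auto
  then show False using assms(1) by simp
qed

lemma complement_connected:
  assumes "T0 \<in> spanning_trees n - stars n"
  shows "connected_on n (Kn_edges n - T0)"
  unfolding connected_on_def
proof (intro ballI)
  fix u v assume u: "u \<in> {1..n}" and v: "v \<in> {1..n}"
  let ?G = "Kn_edges n - T0"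
  have acyc: "\<not> has_cycle T0" using assms unfolding spanning_trees_def by auto
  have ed: "reach ?G a b" if "a \<in> {1..n}" "b \<in> {1..n}" "a \<noteq> b" "{a,b} \<notin> T0" for a b
    using kn_edge[OF that(1-3)] that(4) by (intro reach_edge) simp
  show "reach ?G u v"
  proof (cases "u = v")
    case True then show ?thesis by (simp add: reach.refl)
  next
    case uv: False
    show ?thesis
    proof (cases "{u,v} \<in> T0")
      case False then show ?thesis using ed u v uv by blast
    next
      case uvT: True
      show ?thesis
      proof (cases "\<exists>w\<in>{1..n}. w \<noteq> u \<and> w \<noteq> v \<and> {u,w} \<notin> T0 \<and> {w,v} \<notin> T0")
        case True
        then obtain w where w: "w \<in> {1..n}" "w \<noteq> u" "w \<noteq> v" "{u,w} \<notin> T0" "{w,v} \<notin> T0" by blast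
        have "reach ?G u w" using ed[OF u w(1) w(2)[symmetric] w(4)] .
        moreover have "reach ?G w v" using ed[OF w(1) v w(3) w(5)] .
        ultimately show ?thesis using reach_trans by blast
      next
        case noW: False
        obtain x where x: "x \<in> {1..n}" "x \<noteq> u" "{u,x} \<notin> T0" using nonstar_nonadj[OF assms u] by blast
        have xv: "x \<noteq> v" using x uvT by auto
        have xvT: "{x,v} \<in> T0" using noW x(1,2,3) xv by blast
        obtain y where y: "y \<in> {1..n}" "y \<noteq> v" "{v,y} \<notin> T0" using nonstar_nonadj[OF assms v] by blast
        have yu: "y \<noteq> u" using y uvT by (auto simp: insert_commute)
        have uyT: "{u,y} \<in> T0" using noW y yu by (auto simp: insert_commute)
        have xy: "x \<noteq> y" using xvT y(3) by (auto simp: insert_commute)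
        have xyT: "{x,y} \<notin> T0"
        proof
          assume "{x,y} \<in> T0"
          have "has_cycle T0" unfolding has_cycle_def
          proof (intro exI[of _ "[u,v,x,y]"] conjI)
            show "length [u,v,x,y] \<ge> 3" by simp
            show "distinct [u,v,x,y]" using uv xv x(2) xy yu y(2) by auto
            show "\<forall>i. Suc i < length [u, v, x, y] \<longrightarrow> {[u, v, x, y] ! i, [u, v, x, y] ! Suc i} \<in> T0"
            proof (intro allI impI)
              fix i assume "Suc i < length [u,v,x,y]"
              then have "i = 0 \<or> i = 1 \<or> i = 2" by auto
              then show "{[u, v, x, y] ! i, [u, v, x, y] ! Suc i} \<in> T0"
                using uvT xvT \<open>{x,y} \<in> T0\<close> by (auto simp: insert_commute)
            qed
            show "{last [u,v,x,y], hd [u,v,x,y]} \<in> T0" using uyT by (simp add: insert_commute)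
          qed
          then show False using acyc by simp
        qed
        have "reach ?G u x" using ed[OF u x(1) x(2)[symmetric] x(3)] .
        moreover have "reach ?G x y" using ed[OF x(1) y(1) xy xyT] .
        moreover have "{y,v} \<notin> T0" using y(3) by (simp add: insert_commute)
        then have "reach ?G y v" using ed[OF y(1) v y(2)] by blast
        ultimately show ?thesis using reach_trans by blast
      qed
    qed
  qed
qed

lemma crossing:
  assumes "reach G u v" "\<not> reach E u v"
  shows "\<exists>x y. {x,y} \<in> G \<and> reach E u x \<and> \<not> reach E u y"
  using assms
proof (induction rule: reach.induct)
  case (refl u) then show ?case by (simp add: reach.refl)
next
  case (step u w' w)
  show ?case
  proof (cases "reach E u w'")
    case True then show ?thesis using step(2,4) by blast
  next
    case False then show ?thesis using step(3) by blast
  qed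
qed

lemma extend_tree:
  assumes "E \<subseteq> G" "G \<subseteq> Kn_edges n" "\<not> has_cycle E" "connected_on n G"
  shows "\<exists>T. E \<subseteq> T \<and> T \<subseteq> G \<and> T \<in> spanning_trees n"
  using assms
proof (induction "card (G - E)" arbitrary: E rule: less_induct)
  case less
  show ?case
  proof (cases "connected_on n E")
    case True
    have "E \<subseteq> Kn_edges n" using less.prems(1,2) by blast
    then have "E \<in> spanning_trees n" using True less.prems(3) unfolding spanning_trees_def by simp
    then show ?thesis using less.prems(1) by blast
  next
    case False
    then obtain u v where uv: "u \<in> {1..n}" "v \<in> {1..n}" "\<not> reach E u v"
      unfolding connected_on_def by blast
    have "reach G u v" using less.prems(4) uv unfolding connected_on_def by blast
    then obtain x y where xy: "{x,y} \<in> G" "reach E u x" "\<not> reach E u y"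
      using crossing[of G u v E] uv(3) by blast
    have nr: "\<not> reach E x y"
    proof
      assume "reach E x y"
      then have "reach E u y" using reach_trans[OF _ xy(2)] by blast
      then show False using xy(3) by simp
    qed
    have nin: "{x,y} \<notin> E"
    proof
      assume "{x,y} \<in> E" then have "reach E x y" by (rule reach_edge)
      then show False using nr by simp
    qed
    have fG: "finite G" using less.prems(2) Kn_finite finite_subset by blast
    have "card (G - insert {x,y} E) < card (G - E)"
    proof -
      have "G - insert {x,y} E \<subset> G - E" using xy(1) nin by auto
      then show ?thesis using fG by (intro psubset_card_mono) auto
    qed
    moreover have "insert {x,y} E \<subseteq> G" using xy(1) less.prems(1) by simp
    moreover have "\<not> has_cycle (insert {x,y} E)" using acyclic_insert[OF less.prems(3) nr] .
    ultimately have "\<exists>T. insert {x,y} E \<subseteq> T \<and> T \<subseteq> G \<and> T \<in> spanning_trees n"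
      using less.prems(2,4) by (intro less.hyps) simp_all
    then show ?thesis by blast
  qed
qed



lemma connected_mono: "connected_on n E \<Longrightarrow> E \<subseteq> E' \<Longrightarrow> connected_on n E'"
  unfolding connected_on_def using reach_mono by blast

context proc begin

lemma valid_und_F: "valid Ds \<Longrightarrow> und Ds \<inter> F = {}"
proof (induction rule: valid.induct)
  case empty then show ?case unfolding und_def by simp
next
  case (ins Ds v r)
  have "{v,r} \<notin> F" using step_not_in(2)[OF ins(2)] unfolding H_def by simp
  then show ?case using ins(3) und_ins by simp
qed

lemma TA_finite: "finite (trees_avoiding n T0 F)"
proof -
  have "trees_avoiding n T0 F \<subseteq> Pow (Kn_edges n)"
    unfolding trees_avoiding_def spanning_trees_def by auto
  then show ?thesis using Kn_finite finite_subset by blast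
qed

lemma main_count:
  assumes T0: "T0 \<in> spanning_trees n - stars n" and cF: "card F = t" and t: "t \<ge> 1"
    and nt: "n \<ge> 2*t+110"
  shows "card (trees_avoiding n T0 F) > n ^ (n - 2*t - 17)"
proof -
  define TA where "TA = trees_avoiding n T0 F"
  define m where "m = card R0 - 3"
  have fF: "finite F" using F_sub Kn_finite finite_subset by blast
  have cR0: "card R0 \<ge> n - t" using comp_count[OF fF F_sub] cF unfolding R0_def by linarith
  have mge: "m \<ge> n - t - 3" using cR0 m_def by linarith
  have T0acyc: "\<not> has_cycle T0" using T0 unfolding spanning_trees_def by auto
  have cT0: "card T0 \<le> n - 1" using acyclic_card[OF T0_sub T0acyc] nt by simp
  have cV: "n ^ m \<le> card (Vk m)" using Vk_bound[OF cT0, of m] m_def by simp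
  define G where "G = F \<union> (Kn_edges n - T0)"
  have GK: "G \<subseteq> Kn_edges n" unfolding G_def using F_sub by blast
  have Gc: "connected_on n G" using connected_mono[OF complement_connected[OF T0]] unfolding G_def by blast
  have ex: "\<exists>T. T \<in> TA \<and> H Ds \<subseteq> T" if "Ds \<in> Vk m" for Ds
  proof -
    have v: "valid Ds" using that unfolding Vk_def by simp
    have "H Ds \<subseteq> G" using valid_und[OF v] unfolding H_def G_def by blast
    then obtain T where T: "H Ds \<subseteq> T" "T \<subseteq> G" "T \<in> spanning_trees n"
      using extend_tree[OF _ GK valid_acyclic[OF v] Gc] by blast
    have "F \<subseteq> T" using T(1) unfolding H_def by blast
    moreover have "(T \<inter> T0) - F = {}" using T(2) unfolding G_def by blast
    ultimately have "T \<in> TA" using T(3) unfolding TA_def trees_avoiding_def by blast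
    then show ?thesis using T(1) by blast
  qed
  define \<Phi> where "\<Phi> Ds = (SOME T. T \<in> TA \<and> H Ds \<subseteq> T)" for Ds
  have \<Phi>: "\<Phi> Ds \<in> TA \<and> H Ds \<subseteq> \<Phi> Ds" if "Ds \<in> Vk m" for Ds
    unfolding \<Phi>_def using someI_ex[OF ex[OF that]] .
  have fib: "card {Ds \<in> Vk m. \<Phi> Ds = T} \<le> n ^ 5" if T: "T \<in> TA" for T
  proof -
    define SS where "SS = {S. S \<subseteq> T - F \<and> card S = m}"
    define RR where "RR = {R. R \<subseteq> {1..n} \<and> card R = 3}"
    let ?g = "\<lambda>Ds. (und Ds, Roots Ds)"
    have inj: "inj_on ?g {Ds \<in> Vk m. \<Phi> Ds = T}"
    proof (rule inj_onI)
      fix x y assume "x \<in> {Ds \<in> Vk m. \<Phi> Ds = T}" "y \<in> {Ds \<in> Vk m. \<Phi> Ds = T}" "?g x = ?g y"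
      then have "valid x" "valid y" "und x = und y" "Roots x = Roots y" unfolding Vk_def by auto
      then show "x = y" by (rule valid_unique)
    qed
    have img: "?g ` {Ds \<in> Vk m. \<Phi> Ds = T} \<subseteq> SS \<times> RR"
    proof
      fix p assume "p \<in> ?g ` {Ds \<in> Vk m. \<Phi> Ds = T}"
      then obtain Ds where Ds: "Ds \<in> Vk m" "\<Phi> Ds = T" "p = ?g Ds" by blast
      have v: "valid Ds" "card Ds = m" using Ds(1) unfolding Vk_def by auto
      have "H Ds \<subseteq> T" using \<Phi>[OF Ds(1)] Ds(2) by simp
      then have "und Ds \<subseteq> T - F" using valid_und_F[OF v(1)] unfolding H_def by blast
      moreover have "card (und Ds) = m" using valid_card[OF v(1)] v(2) by simp
      moreover have "Roots Ds \<subseteq> {1..n}" using Roots_sub R0_sub by blast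
      moreover have "card (Roots Ds) = 3"
        using valid_card[OF v(1)] v(2) m_def cR0 nt by linarith
      ultimately show "p \<in> SS \<times> RR" using Ds(3) unfolding SS_def RR_def by simp
    qed
    have TK: "T \<subseteq> Kn_edges n" "\<not> has_cycle T" "F \<subseteq> T"
      using T unfolding TA_def trees_avoiding_def spanning_trees_def by auto
    have fT: "finite T" using TK(1) Kn_finite finite_subset by blast
    have cT: "card T \<le> n - 1" using acyclic_card[OF TK(1,2)] nt by simp
    define a where "a = card (T - F)"
    have a: "a = card T - t" unfolding a_def using card_Diff_subset[OF fF TK(3)] cF by simp
    have am: "a \<le> m + 2" using a cT mge nt by linarith
    have an: "a \<le> n" using a cT by linarith
    have cSS: "card SS = a choose m" unfolding SS_def a_def using fT by (intro n_subsets) simp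
    have "a choose m \<le> n ^ 2"
    proof (cases "m \<le> a")
      case True
      then have "a choose m = a choose (a - m)" by (rule binomial_symmetric)
      also have "\<dots> \<le> a ^ (a - m)" by (rule binomial_le_pow) simp
      also have "\<dots> \<le> n ^ (a - m)" using an by (rule power_mono) simp
      also have "\<dots> \<le> n ^ 2" using am nt by (intro power_increasing) auto
      finally show ?thesis .
    next
      case False then have "a choose m = 0" by (simp add: binomial_eq_0)
      then show ?thesis by linarith
    qed
    then have c1: "card SS \<le> n ^ 2" using cSS by simp
    have "card RR = n choose 3" unfolding RR_def by (subst n_subsets) simp_all
    also have "\<dots> \<le> n ^ 3" using nt by (intro binomial_le_pow) simp
    finally have c2: "card RR \<le> n ^ 3" .
    have fSR: "finite (SS \<times> RR)"
    proof -
      have "SS \<subseteq> Pow T" unfolding SS_def by auto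
      moreover have "RR \<subseteq> Pow {1..n}" unfolding RR_def by auto
      ultimately show ?thesis using fT finite_subset by (metis finite_Pow_iff finite_SigmaI finite_atLeastAtMost)
    qed
    have "card {Ds \<in> Vk m. \<Phi> Ds = T} = card (?g ` {Ds \<in> Vk m. \<Phi> Ds = T})"
      using card_image[OF inj] by simp
    also have "\<dots> \<le> card (SS \<times> RR)" using img fSR by (rule card_mono[rotated])
    also have "\<dots> = card SS * card RR" by (rule card_cartesian_product)
    also have "\<dots> \<le> n ^ 2 * n ^ 3" using c1 c2 by (rule mult_le_mono)
    also have "\<dots> = n ^ 5" by (simp add: power_add[symmetric])
    finally show ?thesis .
  qed
  have fTA: "finite TA" unfolding TA_def by (rule TA_finite)
  have "Vk m \<subseteq> (\<Union>T\<in>TA. {Ds \<in> Vk m. \<Phi> Ds = T})" using \<Phi> by blast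
  then have "card (Vk m) \<le> card (\<Union>T\<in>TA. {Ds \<in> Vk m. \<Phi> Ds = T})"
    using fTA Vk_finite by (intro card_mono) auto
  also have "\<dots> \<le> (\<Sum>T\<in>TA. card {Ds \<in> Vk m. \<Phi> Ds = T})" by (rule card_UN_le[OF fTA])
  also have "\<dots> \<le> (\<Sum>T\<in>TA. n ^ 5)" using fib by (rule sum_mono)
  also have "\<dots> = card TA * n ^ 5" by simp
  finally have k1: "n ^ m \<le> card TA * n ^ 5" using cV by linarith
  have m5: "m = (m - 5) + 5" using mge nt by linarith
  have "n ^ (m - 5) * n ^ 5 \<le> card TA * n ^ 5" using k1 m5 by (metis power_add)
  then have k2: "n ^ (m - 5) \<le> card TA" using nt by simp
  have "n ^ (n - 2*t - 17) < n ^ (m - 5)" using mge nt t by (intro power_strict_increasing) auto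
  then show ?thesis using k2 unfolding TA_def by linarith
qed

end


lemma reach_isolated: "reach E u w \<Longrightarrow> \<forall>e\<in>E. w \<notin> e \<Longrightarrow> u = w"
  by (erule reach.cases) auto

definition pathE :: "nat \<Rightarrow> nat set set" where "pathE k = (\<lambda>i. {i, Suc i}) ` {1..<k}"
definition starE :: "nat \<Rightarrow> nat set set" where "starE k = (\<lambda>i. {1, i}) ` {3..<k}"

lemma path_acyclic: "\<not> has_cycle (pathE k)"
proof (induction k)
  case 0 then show ?case unfolding pathE_def has_cycle_def by simp
next
  case (Suc k)
  show ?case
  proof (cases "k \<ge> 1")
    case False then have "pathE (Suc k) = pathE k" unfolding pathE_def by auto
    then show ?thesis using Suc by simp
  next
    case True
    then have e: "pathE (Suc k) = insert {k, Suc k} (pathE k)" unfolding pathE_def by auto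
    have "\<forall>e\<in>pathE k. Suc k \<notin> e" unfolding pathE_def by auto
    then have "\<not> reach (pathE k) k (Suc k)" using reach_isolated by fastforce
    then show ?thesis using acyclic_insert[OF Suc] e by simp
  qed
qed

lemma star_acyclic: "\<not> has_cycle (starE k)"
proof (induction k)
  case 0 then show ?case unfolding starE_def has_cycle_def by simp
next
  case (Suc k)
  show ?case
  proof (cases "k \<ge> 3")
    case False then have "starE (Suc k) = starE k" unfolding starE_def by auto
    then show ?thesis using Suc by simp
  next
    case True
    then have e: "starE (Suc k) = insert {1, k} (starE k)" unfolding starE_def by auto
    have "\<forall>e\<in>starE k. k \<notin> e" unfolding starE_def using True by auto
    then have "\<not> reach (starE k) 1 k" using reach_isolated True by fastforce
    then show ?thesis using acyclic_insert[OF Suc] e by simp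
  qed
qed

lemma path_conn: "i \<in> {1..n} \<Longrightarrow> reach (pathE n) 1 i"
proof (induction i)
  case 0 then show ?case by simp
next
  case (Suc i)
  show ?case
  proof (cases "i = 0")
    case True then show ?thesis by (simp add: reach.refl)
  next
    case False
    then have "reach (pathE n) 1 i" using Suc by simp
    moreover have "{i, Suc i} \<in> pathE n" unfolding pathE_def using False Suc.prems by auto
    ultimately show ?thesis by (rule reach.step)
  qed
qed

lemma path_tree: "n \<ge> 1 \<Longrightarrow> pathE n \<in> spanning_trees n"
proof -
  assume n: "n \<ge> 1"
  have "pathE n \<subseteq> Kn_edges n" unfolding pathE_def Kn_edges_def by auto
  moreover have "connected_on n (pathE n)" unfolding connected_on_def
  proof (intro ballI)
    fix u v assume "u \<in> {1..n}" "v \<in> {1..n}"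
    show "reach (pathE n) u v" using reach_trans[OF path_conn[OF \<open>v \<in> {1..n}\<close>] reach_sym[OF path_conn[OF \<open>u \<in> {1..n}\<close>]]] .
  qed
  ultimately show ?thesis using path_acyclic unfolding spanning_trees_def by simp
qed

lemma path_nonstar:
  assumes "n \<ge> 4"
  shows "pathE n \<notin> stars n"
proof
  assume "pathE n \<in> stars n"
  then obtain v where v: "v \<in> {1..n}" "card {e \<in> pathE n. v \<in> e} = n - 1" unfolding stars_def by blast
  have "{e \<in> pathE n. v \<in> e} \<subseteq> {{v - 1, v}, {v, Suc v}}"
    unfolding pathE_def by (auto simp: insert_commute)
  then have "card {e \<in> pathE n. v \<in> e} \<le> card {{v - 1, v}, {v, Suc v}}" by (intro card_mono) auto
  also have "\<dots> \<le> 2" by (rule card_insert_le_m1) auto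
  finally show False using v(2) assms by linarith
qed

lemma star_props:
  assumes "t + 2 \<le> n"
  shows "is_forest n (starE (t+3))" "card (starE (t+3)) = t" "pathE n \<inter> starE (t+3) = {}"
proof -
  have "starE (t+3) \<subseteq> Kn_edges n"
  proof
    fix e assume "e \<in> starE (t+3)"
    then obtain i where i: "e = {1,i}" "i \<in> {3..<t+3}" unfolding starE_def by (rule imageE)
    then show "e \<in> Kn_edges n" using assms by (intro kn_edge[of 1 n i, folded i(1)]) auto
  qed
  then show "is_forest n (starE (t+3))" unfolding is_forest_def using star_acyclic by simp
  have "inj_on (\<lambda>i. {1, i}) {3..<t+3}" by (rule inj_onI) (auto simp: doubleton_eq_iff)
  then show "card (starE (t+3)) = t" unfolding starE_def by (simp add: card_image)
  show "pathE n \<inter> starE (t+3) = {}"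
  proof (rule ccontr)
    assume "pathE n \<inter> starE (t+3) \<noteq> {}"
    then obtain x where x: "x \<in> pathE n" "x \<in> starE (t+3)" by blast
    obtain i where i: "x = {i, Suc i}" "i \<in> {1..<n}" using x(1) unfolding pathE_def by (rule imageE)
    obtain j where j: "x = {1, j}" "j \<in> {3..<t+3}" using x(2) unfolding starE_def by (rule imageE)
    have ij: "{i, Suc i} = {1, j}" "1 \<le> i" "3 \<le> j" using i j by simp_all
    then have "(i = 1 \<and> Suc i = j) \<or> (i = j \<and> Suc i = 1)" by (simp add: doubleton_eq_iff)
    then show False using ij(2,3) by auto
  qed
qed

theorem proposition3p1:
  fixes t n :: nat
  assumes "t \<ge> 1" and "n \<ge> 2 * t + 110"
  shows "D n t > n ^ (n - 2 * t - 17)"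
proof -
  define S where "S = {card (trees_avoiding n T0 F) | F T0.
      is_forest n F \<and> card F = t \<and> T0 \<in> spanning_trees n - stars n \<and> card (T0 \<inter> F) < t}"
  have DS: "D n t = Min S" unfolding D_def S_def by auto
  have fin: "finite S"
  proof -
    have "S \<subseteq> (\<lambda>(F,T0). card (trees_avoiding n T0 F)) ` (Pow (Kn_edges n) \<times> Pow (Kn_edges n))"
    proof
      fix x assume "x \<in> S"
      then obtain F T0 where FT: "x = card (trees_avoiding n T0 F)" "is_forest n F"
        "T0 \<in> spanning_trees n - stars n" using \<open>x \<in> S\<close> unfolding S_def by blast
      have "F \<subseteq> Kn_edges n" using FT(2) unfolding is_forest_def by simp
      moreover have "T0 \<subseteq> Kn_edges n" using FT(3) unfolding spanning_trees_def by simp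
      ultimately show "x \<in> (\<lambda>(F,T0). card (trees_avoiding n T0 F)) ` (Pow (Kn_edges n) \<times> Pow (Kn_edges n))"
        using FT(1) by (intro image_eqI[of _ _ "(F,T0)"]) auto
    qed
    then show ?thesis by (rule finite_subset) (simp add: Kn_finite)
  qed
  have ne: "S \<noteq> {}"
  proof -
    have sp: "is_forest n (starE (t+3))" "card (starE (t+3)) = t" "pathE n \<inter> starE (t+3) = {}"
      using star_props[of t n] assms by auto
    have "pathE n \<in> spanning_trees n - stars n" using path_tree path_nonstar assms by simp
    then have "card (trees_avoiding n (pathE n) (starE (t+3))) \<in> S"
      unfolding S_def mem_Collect_eq using sp assms
      by (intro exI[of _ "starE (t+3)"] exI[of _ "pathE n"]) simp
    then show ?thesis by blast
  qed
  have all: "x > n ^ (n - 2 * t - 17)" if "x \<in> S" for x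
  proof -
    obtain F T0 where FT: "x = card (trees_avoiding n T0 F)" "is_forest n F" "card F = t"
      "T0 \<in> spanning_trees n - stars n"
      using \<open>x \<in> S\<close> unfolding S_def by blast
    have "T0 \<subseteq> Kn_edges n" using FT(4) unfolding spanning_trees_def by auto
    then interpret proc n F T0 using FT(2) by unfold_locales
    show ?thesis using main_count[OF FT(4) FT(3) assms] FT(1) by simp
  qed
  have "Min S \<in> S" using fin ne by (rule Min_in)
  then have "Min S > n ^ (n - 2 * t - 17)" by (rule all)
  then show ?thesis unfolding DS .
qed


end
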